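(* Let $n,\nu\ge1$ and let the coefficients $\gamma^{(f)}_{ik,j},\gamma^{(m)}_{ik,l}$ satisfy $\gamma^{(f)}_{ik,j}\ge0$, $\gamma^{(m)}_{ik,l}\ge0$ and $\sum_{j=1}^n\gamma^{(f)}_{ik,j}+\sum_{l=1}^\nu\gamma^{(m)}_{ik,l}=1$ for all $i\in\{1,\dots,n\}$, $k\in\{1,\dots,\nu\}$. Then the normalized gonosomal operator $V$ maps $\mathcal S^{n,\nu}$ into itself if and only if, for every $i\in\{1,\dots,n\}$ and $k\in\{1,\dots,\nu\}$, the vector $(\gamma^{(f)}_{ik,1},\dots,\gamma^{(f)}_{ik,n},\gamma^{(m)}_{ik,1},\dots,\gamma^{(m)}_{ik,\nu})$ belongs to $\mathcal S^{n,\nu}$.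
   Context: $S^{n+\nu-1}=\{(x_1,\dots,x_n,y_1,\dots,y_\nu)\in\mathbb{R}^{n+\nu}: x_i\ge0,\ y_j\ge0,\ \sum_i x_i+\sum_j y_j=1\}$. $\mathcal O=\{s\in S^{n+\nu-1}: (x_1,\dots,x_n)=0 \text{ or } (y_1,\dots,y_\nu)=0\}$ and $\mathcal S^{n,\nu}=S^{n+\nu-1}\setminus\mathcal O$. The normalized gonosomal operator $V$ on $\mathcal S^{n,\nu}$ is $V(x,y)=(x',y')$ with $x'_j=\dfrac{\sum_{i=1}^n\sum_{k=1}^\nu\gamma^{(f)}_{ik,j}x_iy_k}{(\sum_{i=1}^n x_i)(\sum_{k=1}^\nu y_k)}$ ($j=1,\dots,n$), $y'_l=\dfrac{\sum_{i=1}^n\sum_{k=1}^\nu\gamma^{(m)}_{ik,l}x_iy_k}{(\sum_{i=1}^n x_i)(\sum_{k=1}^\nu y_k)}$ ($l=1,\dots,\nu$). *)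

theory Defs
  imports Complex_Main
begin

text \<open>Points of R^(n+nu) are represented by a pair (x, y) of functions nat => real,
  where only x 1..x n and y 1..y nu are relevant.\<close>

definition simplex :: "nat \<Rightarrow> nat \<Rightarrow> ((nat \<Rightarrow> real) \<times> (nat \<Rightarrow> real)) set" where
  "simplex n \<nu> = {(x, y). (\<forall>i\<in>{1..n}. x i \<ge> 0) \<and> (\<forall>k\<in>{1..\<nu>}. y k \<ge> 0) \<and>
      (\<Sum>i=1..n. x i) + (\<Sum>k=1..\<nu>. y k) = 1}"

definition boundary_O :: "nat \<Rightarrow> nat \<Rightarrow> ((nat \<Rightarrow> real) \<times> (nat \<Rightarrow> real)) set" where
  "boundary_O n \<nu> = {(x, y) \<in> simplex n \<nu>. (\<forall>i\<in>{1..n}. x i = 0) \<or> (\<forall>k\<in>{1..\<nu>}. y k = 0)}"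

definition S_gon :: "nat \<Rightarrow> nat \<Rightarrow> ((nat \<Rightarrow> real) \<times> (nat \<Rightarrow> real)) set" where
  "S_gon n \<nu> = simplex n \<nu> - boundary_O n \<nu>"

text \<open>Normalized gonosomal operator; gf i k j = gamma^(f)_{ik,j}, gm i k l = gamma^(m)_{ik,l}.\<close>
definition gonosomal_V ::
  "nat \<Rightarrow> nat \<Rightarrow> (nat \<Rightarrow> nat \<Rightarrow> nat \<Rightarrow> real) \<Rightarrow> (nat \<Rightarrow> nat \<Rightarrow> nat \<Rightarrow> real)
    \<Rightarrow> (nat \<Rightarrow> real) \<times> (nat \<Rightarrow> real) \<Rightarrow> (nat \<Rightarrow> real) \<times> (nat \<Rightarrow> real)" where
  "gonosomal_V n \<nu> gf gm = (\<lambda>(x, y).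
     ((\<lambda>j. (\<Sum>i=1..n. \<Sum>k=1..\<nu>. gf i k j * x i * y k) / ((\<Sum>i=1..n. x i) * (\<Sum>k=1..\<nu>. y k))),
      (\<lambda>l. (\<Sum>i=1..n. \<Sum>k=1..\<nu>. gm i k l * x i * y k) / ((\<Sum>i=1..n. x i) * (\<Sum>k=1..\<nu>. y k)))))"

end

theory Submission
  imports Defs
begin

lemma swap3:
  "(\<Sum>j\<in>A. \<Sum>i\<in>B. \<Sum>k\<in>C. (f i k j::real)) = (\<Sum>i\<in>B. \<Sum>k\<in>C. \<Sum>j\<in>A. f i k j)"
proof -
  have "(\<Sum>j\<in>A. \<Sum>i\<in>B. \<Sum>k\<in>C. f i k j) = (\<Sum>i\<in>B. \<Sum>j\<in>A. \<Sum>k\<in>C. f i k j)"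
    by (rule sum.swap)
  also have "\<dots> = (\<Sum>i\<in>B. \<Sum>k\<in>C. \<Sum>j\<in>A. f i k j)"
    by (rule sum.cong[OF refl], rule sum.swap)
  finally show ?thesis .
qed

lemma S_gon_iff:
  "(x, y) \<in> S_gon n \<nu> \<longleftrightarrow> (\<forall>i\<in>{1..n}. x i \<ge> 0) \<and> (\<forall>k\<in>{1..\<nu>}. y k \<ge> 0) \<and>
      (\<Sum>i=1..n. x i) + (\<Sum>k=1..\<nu>. y k) = 1 \<and> (\<exists>i\<in>{1..n}. x i \<noteq> 0) \<and> (\<exists>k\<in>{1..\<nu>}. y k \<noteq> 0)"
  unfolding S_gon_def boundary_O_def simplex_def by auto

theorem proposition4p1:
  fixes n \<nu> :: nat and gf gm :: "nat \<Rightarrow> nat \<Rightarrow> nat \<Rightarrow> real"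
  assumes "n \<ge> 1" and "\<nu> \<ge> 1"
    and "\<And>i k j. i \<in> {1..n} \<Longrightarrow> k \<in> {1..\<nu>} \<Longrightarrow> j \<in> {1..n} \<Longrightarrow> gf i k j \<ge> 0"
    and "\<And>i k l. i \<in> {1..n} \<Longrightarrow> k \<in> {1..\<nu>} \<Longrightarrow> l \<in> {1..\<nu>} \<Longrightarrow> gm i k l \<ge> 0"
    and "\<And>i k. i \<in> {1..n} \<Longrightarrow> k \<in> {1..\<nu>} \<Longrightarrow>
           (\<Sum>j=1..n. gf i k j) + (\<Sum>l=1..\<nu>. gm i k l) = 1"
  shows "(gonosomal_V n \<nu> gf gm ` S_gon n \<nu> \<subseteq> S_gon n \<nu>) \<longleftrightarrow>
         (\<forall>i\<in>{1..n}. \<forall>k\<in>{1..\<nu>}. (gf i k, gm i k) \<in> S_gon n \<nu>)"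
proof
  assume H: "gonosomal_V n \<nu> gf gm ` S_gon n \<nu> \<subseteq> S_gon n \<nu>"
  show "\<forall>i\<in>{1..n}. \<forall>k\<in>{1..\<nu>}. (gf i k, gm i k) \<in> S_gon n \<nu>"
  proof (intro ballI)
    fix i k assume i: "i \<in> {1..n}" and k: "k \<in> {1..\<nu>}"
    define x where "x = (\<lambda>i'. if i' = i then 1/2 else (0::real))"
    define y where "y = (\<lambda>k'. if k' = k then 1/2 else (0::real))"
    have sx: "(\<Sum>i'=1..n. x i') = 1/2" using i unfolding x_def by (simp add: sum.delta)
    have sy: "(\<Sum>k'=1..\<nu>. y k') = 1/2" using k unfolding y_def by (simp add: sum.delta)
    have mem: "(x, y) \<in> S_gon n \<nu>"
      unfolding S_gon_iff using sx sy i k by (auto simp: x_def y_def)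
    have e1: "\<And>j. (\<Sum>i'=1..n. \<Sum>k'=1..\<nu>. gf i' k' j * x i' * y k') = gf i k j / 4"
    proof -
      fix j
      have "\<And>i' k'. gf i' k' j * x i' * y k' = (if k' = k then (if i' = i then gf i k j / 4 else 0) else 0)"
        by (simp add: x_def y_def)
      then show "(\<Sum>i'=1..n. \<Sum>k'=1..\<nu>. gf i' k' j * x i' * y k') = gf i k j / 4"
        using i k by (simp add: sum.delta)
    qed
    have e2: "\<And>l. (\<Sum>i'=1..n. \<Sum>k'=1..\<nu>. gm i' k' l * x i' * y k') = gm i k l / 4"
    proof -
      fix l
      have "\<And>i' k'. gm i' k' l * x i' * y k' = (if k' = k then (if i' = i then gm i k l / 4 else 0) else 0)"
        by (simp add: x_def y_def)
      then show "(\<Sum>i'=1..n. \<Sum>k'=1..\<nu>. gm i' k' l * x i' * y k') = gm i k l / 4"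
        using i k by (simp add: sum.delta)
    qed
    have "gonosomal_V n \<nu> gf gm (x, y) = (gf i k, gm i k)"
      unfolding gonosomal_V_def by (simp only: split sx sy e1 e2 prod.inject fun_eq_iff) simp
    then show "(gf i k, gm i k) \<in> S_gon n \<nu>" using H mem by force
  qed
next
  assume H: "\<forall>i\<in>{1..n}. \<forall>k\<in>{1..\<nu>}. (gf i k, gm i k) \<in> S_gon n \<nu>"
  show "gonosomal_V n \<nu> gf gm ` S_gon n \<nu> \<subseteq> S_gon n \<nu>"
  proof
    fix p assume "p \<in> gonosomal_V n \<nu> gf gm ` S_gon n \<nu>"
    then obtain x y where mem: "(x, y) \<in> S_gon n \<nu>" and p: "p = gonosomal_V n \<nu> gf gm (x, y)"
      by auto
    from mem have xn: "\<forall>i\<in>{1..n}. x i \<ge> 0" and yn: "\<forall>k\<in>{1..\<nu>}. y k \<ge> 0"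
      and s1: "(\<Sum>i=1..n. x i) + (\<Sum>k=1..\<nu>. y k) = 1"
      and "\<exists>i\<in>{1..n}. x i \<noteq> 0" and "\<exists>k\<in>{1..\<nu>}. y k \<noteq> 0"
      unfolding S_gon_iff by auto
    then obtain i0 k0 where i0: "i0 \<in> {1..n}" "x i0 > 0" and k0: "k0 \<in> {1..\<nu>}" "y k0 > 0"
      by (metis less_eq_real_def)
    define X where "X = (\<Sum>i=1..n. x i)"
    define Y where "Y = (\<Sum>k=1..\<nu>. y k)"
    have "x i0 \<le> X" unfolding X_def using i0 xn by (intro member_le_sum) auto
    hence Xp: "X > 0" using i0 by linarith
    have "y k0 \<le> Y" unfolding Y_def using k0 yn by (intro member_le_sum) auto
    hence Yp: "Y > 0" using k0 by linarith
    define D where "D = X * Y"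
    have Dp: "D > 0" unfolding D_def using Xp Yp by simp
    define F where "F = (\<lambda>j. \<Sum>i=1..n. \<Sum>k=1..\<nu>. gf i k j * x i * y k)"
    define M where "M = (\<lambda>l. \<Sum>i=1..n. \<Sum>k=1..\<nu>. gm i k l * x i * y k)"
    have p2: "p = ((\<lambda>j. F j / D), (\<lambda>l. M l / D))"
      unfolding p gonosomal_V_def F_def M_def D_def X_def Y_def by simp
    have Fn: "\<And>j. j \<in> {1..n} \<Longrightarrow> F j \<ge> 0"
      unfolding F_def using xn yn assms(3) by (intro sum_nonneg) (simp add: sum_nonneg)
    have Mn: "\<And>l. l \<in> {1..\<nu>} \<Longrightarrow> M l \<ge> 0"
      unfolding M_def using xn yn assms(4) by (intro sum_nonneg) (simp add: sum_nonneg)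
    have "(\<Sum>j=1..n. F j) + (\<Sum>l=1..\<nu>. M l)
        = (\<Sum>i=1..n. \<Sum>k=1..\<nu>. \<Sum>j=1..n. gf i k j * x i * y k)
          + (\<Sum>i=1..n. \<Sum>k=1..\<nu>. \<Sum>l=1..\<nu>. gm i k l * x i * y k)"
    proof -
      have a: "(\<Sum>j=1..n. F j) = (\<Sum>i=1..n. \<Sum>k=1..\<nu>. \<Sum>j=1..n. gf i k j * x i * y k)"
        unfolding F_def by (rule swap3)
      have b: "(\<Sum>l=1..\<nu>. M l) = (\<Sum>i=1..n. \<Sum>k=1..\<nu>. \<Sum>l=1..\<nu>. gm i k l * x i * y k)"
        unfolding M_def by (rule swap3)
      show ?thesis by (simp only: a b)
    qed
    also have "\<dots> = (\<Sum>i=1..n. \<Sum>k=1..\<nu>. ((\<Sum>j=1..n. gf i k j) + (\<Sum>l=1..\<nu>. gm i k l)) * x i * y k)"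
    proof -
      have "\<And>i k. (\<Sum>j=1..n. gf i k j * x i * y k) + (\<Sum>l=1..\<nu>. gm i k l * x i * y k)
          = ((\<Sum>j=1..n. gf i k j) + (\<Sum>l=1..\<nu>. gm i k l)) * x i * y k"
        by (simp only: sum_distrib_right distrib_right)
      then show ?thesis by (simp only: sum.distrib[symmetric])
    qed
    also have "\<dots> = (\<Sum>i=1..n. \<Sum>k=1..\<nu>. x i * y k)"
      using assms(5) by (intro sum.cong refl) simp
    also have "\<dots> = D" unfolding D_def X_def Y_def
      by (simp add: sum_product)
    finally have sumFM: "(\<Sum>j=1..n. F j) + (\<Sum>l=1..\<nu>. M l) = D" .
    from H i0(1) k0(1) have g: "(gf i0 k0, gm i0 k0) \<in> S_gon n \<nu>" by blast
    then obtain j0 l0 where j0: "j0 \<in> {1..n}" "gf i0 k0 j0 \<noteq> 0"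
      and l0: "l0 \<in> {1..\<nu>}" "gm i0 k0 l0 \<noteq> 0" unfolding S_gon_iff by blast
    have gfp: "gf i0 k0 j0 > 0" using j0 assms(3)[OF i0(1) k0(1) j0(1)] by linarith
    have gmp: "gm i0 k0 l0 > 0" using l0 assms(4)[OF i0(1) k0(1) l0(1)] by linarith
    have "gf i0 k0 j0 * x i0 * y k0 \<le> (\<Sum>k=1..\<nu>. gf i0 k j0 * x i0 * y k)"
      using k0 xn yn assms(3) i0 j0 by (intro member_le_sum) auto
    also have "\<dots> \<le> F j0" unfolding F_def
      using i0 xn yn assms(3) j0 by (intro member_le_sum) (auto intro!: sum_nonneg)
    finally have Fp: "F j0 > 0" using gfp i0 k0
      by (smt (verit) mult_pos_pos)
    have "gm i0 k0 l0 * x i0 * y k0 \<le> (\<Sum>k=1..\<nu>. gm i0 k l0 * x i0 * y k)"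
      using k0 xn yn assms(4) i0 l0 by (intro member_le_sum) auto
    also have "\<dots> \<le> M l0" unfolding M_def
      using i0 xn yn assms(4) l0 by (intro member_le_sum) (auto intro!: sum_nonneg)
    finally have Mp: "M l0 > 0" using gmp i0 k0
      by (smt (verit) mult_pos_pos)
    have that: "(\<Sum>j=1..n. F j / D) + (\<Sum>l=1..\<nu>. M l / D) = 1"
      using sumFM Dp by (simp add: sum_divide_distrib[symmetric] add_divide_distrib[symmetric])
    then show "p \<in> S_gon n \<nu>" unfolding p2 S_gon_iff
    proof (intro conjI)
      show "\<forall>i\<in>{1..n}. 0 \<le> F i / D" using Fn Dp by simp
      show "\<forall>k\<in>{1..\<nu>}. 0 \<le> M k / D" using Mn Dp by simp
      show "\<exists>i\<in>{1..n}. F i / D \<noteq> 0" using j0(1) Fp Dp by (intro bexI[of _ j0]) auto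
      show "\<exists>k\<in>{1..\<nu>}. M k / D \<noteq> 0" using l0(1) Mp Dp by (intro bexI[of _ l0]) auto
    qed (rule that)
  qed
qed

end
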